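(* Let $\varphi\colon G\twoheadrightarrow Q$ be an epimorphism from a finitely generated group $G$ to a group $Q$, and let $\varphi^*\colon H^1(Q,\mathbb{Q})\hookrightarrow H^1(G,\mathbb{Q})$ be the induced monomorphism. Then for each $r\ge1$ the induced map $\varphi^*_r\colon\operatorname{Grass}_r(H^1(Q,\mathbb{Q}))\hookrightarrow\operatorname{Grass}_r(H^1(G,\mathbb{Q}))$ maps $\operatorname{Grass}_r(H^1(Q,\mathbb{Q}))\setminus\Omega^1_r(Q)$ into $\operatorname{Grass}_r(H^1(G,\mathbb{Q}))\setminus\Omega^1_r(G)$.
   Context: For a finitely generated group $H$ and an epimorphism $\nu\colon H\twoheadrightarrow\mathbb{Z}^r$, let $P_\nu=\operatorname{im}(\nu^*\colon\mathbb{Q}^r\to H^1(H,\mathbb{Q}))$; every rational $r$-plane in $H^1(H,\mathbb{Q})$ is of this form. The Dwyer–Fried sets of $H$ are $\Omega^i_r(H)=\{P_\nu\in\operatorname{Grass}_r(H^1(H,\mathbb{Q}))\mid b_j(\ker\nu)<\infty\ \text{for all } j\le i\}$, where $b_j$ denotes the $j$-th rational Betti number of the group (equivalently of the $\mathbb{Z}^r$-cover of $K(H,1)$ determined by $\nu$); by convention this is empty if $r>b_1(H)$. *)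

theory Defs
  imports "HOL-Algebra.Algebra"
begin

definition add_grp :: "('b::comm_monoid_add) monoid" where
  "add_grp = \<lparr>carrier = UNIV, monoid.mult = (+), one = 0\<rparr>"

definition fin_gen_group :: "('a, 'c) monoid_scheme \<Rightarrow> bool" where
  "fin_gen_group G \<longleftrightarrow> group G \<and> (\<exists>S. finite S \<and> S \<subseteq> carrier G \<and> generate G S = carrier G)"

text \<open>H^1(G,Q) = Hom(G,(Q,+)), homomorphisms represented as extensional functions on carrier G.\<close>
definition H1 :: "('a, 'c) monoid_scheme \<Rightarrow> ('a \<Rightarrow> rat) set" where
  "H1 G = hom G (add_grp :: rat monoid) \<inter> extensional (carrier G)"

definition qspan :: "('a, 'c) monoid_scheme \<Rightarrow> nat \<Rightarrow> (nat \<Rightarrow> 'a \<Rightarrow> rat) \<Rightarrow> ('a \<Rightarrow> rat) set" where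
  "qspan G r f = {restrict (\<lambda>x. \<Sum>i<r. c i * f i x) (carrier G) | c. True}"

definition qlin_indep :: "('a, 'c) monoid_scheme \<Rightarrow> nat \<Rightarrow> (nat \<Rightarrow> 'a \<Rightarrow> rat) \<Rightarrow> bool" where
  "qlin_indep G r f \<longleftrightarrow>
     (\<forall>c. (\<forall>x\<in>carrier G. (\<Sum>i<r. c i * f i x) = 0) \<longrightarrow> (\<forall>i<r. c i = 0))"

definition Grass :: "nat \<Rightarrow> ('a, 'c) monoid_scheme \<Rightarrow> ('a \<Rightarrow> rat) set set" where
  "Grass r G = {P. \<exists>f. (\<forall>i<r. f i \<in> H1 G) \<and> qlin_indep G r f \<and> P = qspan G r f}"

text \<open>An epimorphism nu : G -> Z^r, given by its r coordinate homomorphisms nu 0, ..., nu (r-1).\<close>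
definition epi_Zr :: "('a, 'c) monoid_scheme \<Rightarrow> nat \<Rightarrow> (nat \<Rightarrow> 'a \<Rightarrow> int) \<Rightarrow> bool" where
  "epi_Zr G r \<nu> \<longleftrightarrow> (\<forall>i<r. \<nu> i \<in> hom G (add_grp :: int monoid)) \<and>
     (\<forall>z::nat \<Rightarrow> int. \<exists>g\<in>carrier G. \<forall>i<r. \<nu> i g = z i)"

definition ker_Zr :: "('a, 'c) monoid_scheme \<Rightarrow> nat \<Rightarrow> (nat \<Rightarrow> 'a \<Rightarrow> int) \<Rightarrow> 'a set" where
  "ker_Zr G r \<nu> = {g \<in> carrier G. \<forall>i<r. \<nu> i g = 0}"

text \<open>P_nu = image of nu^* : Q^r -> H^1(G,Q), i.e. the rational span of the coordinates of nu.\<close>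
definition P_nu :: "('a, 'c) monoid_scheme \<Rightarrow> nat \<Rightarrow> (nat \<Rightarrow> 'a \<Rightarrow> int) \<Rightarrow> ('a \<Rightarrow> rat) set" where
  "P_nu G r \<nu> = qspan G r (\<lambda>i x. of_int (\<nu> i x))"

text \<open>b_1(K) < infinity for a subgroup K of G: H_1(K;Q) = K_ab \<otimes> Q is finite-dimensional,
  i.e. finitely many elements of K span K_ab \<otimes> Q: every k in K has a positive power
  in the subgroup generated by S and the commutator subgroup [K,K].\<close>
definition b1_finite :: "('a, 'c) monoid_scheme \<Rightarrow> 'a set \<Rightarrow> bool" where
  "b1_finite G K \<longleftrightarrow> (\<exists>S. finite S \<and> S \<subseteq> K \<and>
     (\<forall>k\<in>K. \<exists>m::nat. m > 0 \<and> k [^]\<^bsub>G\<^esub> m \<in> generate G (S \<union> derived G K)))"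

text \<open>Omega^1_r(G). (b_0 of a group is always 1, hence only b_1 needs to be finite.)\<close>
definition Omega1 :: "nat \<Rightarrow> ('a, 'c) monoid_scheme \<Rightarrow> ('a \<Rightarrow> rat) set set" where
  "Omega1 r G = {P \<in> Grass r G. \<exists>\<nu>. epi_Zr G r \<nu> \<and> P = P_nu G r \<nu> \<and> b1_finite G (ker_Zr G r \<nu>)}"

definition pullback :: "('a, 'c) monoid_scheme \<Rightarrow> ('a \<Rightarrow> 'b) \<Rightarrow> ('b \<Rightarrow> rat) \<Rightarrow> ('a \<Rightarrow> rat)" where
  "pullback G \<phi> f = restrict (f \<circ> \<phi>) (carrier G)"

definition pullback_Grass :: "('a, 'c) monoid_scheme \<Rightarrow> ('a \<Rightarrow> 'b) \<Rightarrow> ('b \<Rightarrow> rat) set \<Rightarrow> ('a \<Rightarrow> rat) set" where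
  "pullback_Grass G \<phi> P = pullback G \<phi> ` P"

end

theory Submission
  imports Defs
begin

lemma qspan_cong:
  assumes "\<And>i x. i < r \<Longrightarrow> x \<in> carrier G \<Longrightarrow> f i x = g i x"
  shows "qspan G r f = qspan G r g"
proof -
  have "restrict (\<lambda>x. \<Sum>i<r. c i * f i x) (carrier G) = restrict (\<lambda>x. \<Sum>i<r. c i * g i x) (carrier G)" for c
    using assms by (intro restrict_ext sum.cong) auto
  thus ?thesis unfolding qspan_def by auto
qed

lemma pullback_qspan:
  assumes "\<phi> \<in> carrier G \<rightarrow> carrier Q"
  shows "pullback_Grass G \<phi> (qspan Q r f) = qspan G r (\<lambda>i. pullback G \<phi> (f i))"
proof -
  have "pullback G \<phi> (restrict (\<lambda>x. \<Sum>i<r. c i * f i x) (carrier Q))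
      = restrict (\<lambda>x. \<Sum>i<r. c i * pullback G \<phi> (f i) x) (carrier G)" for c
    using assms unfolding pullback_def by (intro restrict_ext) (auto simp: Pi_iff)
  thus ?thesis unfolding pullback_Grass_def qspan_def by (auto simp: image_def)
qed

lemma pullback_inj:
  assumes "\<phi> ` carrier G = carrier Q" "f \<in> extensional (carrier Q)" "g \<in> extensional (carrier Q)"
    and "pullback G \<phi> f = pullback G \<phi> g"
  shows "f = g"
proof (rule extensionalityI[OF assms(2,3)])
  fix y assume "y \<in> carrier Q"
  then obtain x where x: "x \<in> carrier G" "y = \<phi> x" using assms(1) by auto
  have "pullback G \<phi> f x = pullback G \<phi> g x" using assms(4) by simp
  thus "f y = g y" using x unfolding pullback_def by simp
qed

lemma qspan_ext: "qspan G r f \<subseteq> extensional (carrier G)"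
  unfolding qspan_def by auto

lemma pullback_H1:
  assumes "group G" "\<phi> \<in> hom G Q" "f \<in> H1 Q"
  shows "pullback G \<phi> f \<in> H1 G"
  using assms monoid.m_closed[OF group.is_monoid[OF assms(1)]] unfolding H1_def pullback_def hom_def add_grp_def
  by (auto simp: Pi_iff)


theorem proposition4p13:
  fixes G :: "('a, 'c) monoid_scheme" and Q :: "('b, 'd) monoid_scheme" and \<phi> :: "'a \<Rightarrow> 'b"
  assumes "fin_gen_group G" and "group Q"
    and "\<phi> \<in> hom G Q" and "\<phi> ` carrier G = carrier Q"
    and "r \<ge> 1"
    and "P \<in> Grass r Q - Omega1 r Q"
  shows "pullback_Grass G \<phi> P \<in> Grass r G - Omega1 r G"
proof -
  have gG: "group G" using assms(1) unfolding fin_gen_group_def by auto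
  have gh: "group_hom G Q \<phi>" using gG assms(2,3) unfolding group_hom_def group_hom_axioms_def by auto
  have phiPi: "\<phi> \<in> carrier G \<rightarrow> carrier Q" using assms(3) unfolding hom_def by auto
  have PG: "P \<in> Grass r Q" and PnO: "P \<notin> Omega1 r Q" using assms(6) by auto
  then obtain f where f: "\<And>i. i < r \<Longrightarrow> f i \<in> H1 Q" "qlin_indep Q r f" "P = qspan Q r f"
    unfolding Grass_def by auto
  have pbP: "pullback_Grass G \<phi> P = qspan G r (\<lambda>i. pullback G \<phi> (f i))"
    using f(3) pullback_qspan[OF phiPi] by simp
  have grass: "pullback_Grass G \<phi> P \<in> Grass r G"
    unfolding Grass_def
  proof (intro CollectI exI conjI allI impI)
    show "pullback G \<phi> (f i) \<in> H1 G" if "i < r" for i using pullback_H1[OF gG assms(3) f(1)[OF that]] .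
    show "qlin_indep G r (\<lambda>i. pullback G \<phi> (f i))"
      unfolding qlin_indep_def
    proof (rule allI, rule impI)
      fix c assume h: "\<forall>x\<in>carrier G. (\<Sum>i<r. c i * pullback G \<phi> (f i) x) = 0"
      have "\<forall>y\<in>carrier Q. (\<Sum>i<r. c i * f i y) = 0"
      proof
        fix y assume "y \<in> carrier Q"
        then obtain x where x: "x \<in> carrier G" "y = \<phi> x" using assms(4) by auto
        thus "(\<Sum>i<r. c i * f i y) = 0" using h[rule_format, OF x(1)] unfolding pullback_def by simp
      qed
      thus "\<forall>i<r. c i = 0" using f(2) unfolding qlin_indep_def by blast
    qed
  qed (rule pbP)
  have "pullback_Grass G \<phi> P \<notin> Omega1 r G"
  proof
    assume "pullback_Grass G \<phi> P \<in> Omega1 r G"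
    then obtain \<nu> where nu: "epi_Zr G r \<nu>" "pullback_Grass G \<phi> P = P_nu G r \<nu>"
        "b1_finite G (ker_Zr G r \<nu>)" unfolding Omega1_def by auto
    have fib: "\<nu> i x1 = \<nu> i x2" if "i < r" "x1 \<in> carrier G" "x2 \<in> carrier G" "\<phi> x1 = \<phi> x2" for i x1 x2
    proof -
      define c where "c = (\<lambda>j. if j = i then (1::rat) else 0)"
      have "(\<Sum>j<r. c j * of_int (\<nu> j x)) = of_int (\<nu> i x)" for x
        using that(1) unfolding c_def by (simp add: if_distrib[of "\<lambda>a. a * _"] sum.delta cong: if_cong)
      hence "restrict (\<lambda>x. of_int (\<nu> i x)) (carrier G) \<in> P_nu G r \<nu>"
        unfolding P_nu_def qspan_def by (intro CollectI exI[of _ c]) auto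
      then obtain p where p: "restrict (\<lambda>x. of_int (\<nu> i x) :: rat) (carrier G) = pullback G \<phi> p"
        using nu(2) unfolding pullback_Grass_def by auto
      have "(of_int (\<nu> i x1) :: rat) = p (\<phi> x1)"
        using fun_cong[OF p, of x1] that unfolding pullback_def by simp
      moreover have "(of_int (\<nu> i x2) :: rat) = p (\<phi> x2)"
        using fun_cong[OF p, of x2] that unfolding pullback_def by simp
      ultimately show ?thesis using that(4) by simp
    qed
    define \<nu>' where "\<nu>' = (\<lambda>i y. \<nu> i (SOME x. x \<in> carrier G \<and> \<phi> x = y))"
    have nu': "\<nu>' i (\<phi> x) = \<nu> i x" if "i < r" "x \<in> carrier G" for i x
    proof -
      have "\<exists>x'. x' \<in> carrier G \<and> \<phi> x' = \<phi> x" using that by auto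
      hence "(SOME x'. x' \<in> carrier G \<and> \<phi> x' = \<phi> x) \<in> carrier G \<and> \<phi> (SOME x'. x' \<in> carrier G \<and> \<phi> x' = \<phi> x) = \<phi> x"
        by (rule someI_ex)
      thus ?thesis unfolding \<nu>'_def using fib that by blast
    qed
    have epi: "epi_Zr Q r \<nu>'"
      unfolding epi_Zr_def
    proof (intro conjI allI impI)
      fix i assume i: "i < r"
      have hi: "\<nu> i \<in> hom G (add_grp :: int monoid)" using nu(1) i unfolding epi_Zr_def by auto
      show "\<nu>' i \<in> hom Q (add_grp :: int monoid)"
        unfolding hom_def
      proof (intro CollectI conjI ballI)
        show "\<nu>' i \<in> carrier Q \<rightarrow> carrier add_grp" by (simp add: add_grp_def)
        fix a b assume "a \<in> carrier Q" "b \<in> carrier Q"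
        then obtain x y where xy: "x \<in> carrier G" "y \<in> carrier G" "a = \<phi> x" "b = \<phi> y"
          using assms(4) by blast
        have "\<phi> (x \<otimes>\<^bsub>G\<^esub> y) = a \<otimes>\<^bsub>Q\<^esub> b" using xy assms(3) unfolding hom_def by auto
        moreover have "x \<otimes>\<^bsub>G\<^esub> y \<in> carrier G" using xy gG by (simp add: group.is_monoid monoid.m_closed)
        ultimately have "\<nu>' i (a \<otimes>\<^bsub>Q\<^esub> b) = \<nu> i (x \<otimes>\<^bsub>G\<^esub> y)" using nu' i by metis
        also have "\<dots> = \<nu> i x + \<nu> i y" using hi xy unfolding hom_def add_grp_def by auto
        finally show "\<nu>' i (a \<otimes>\<^bsub>Q\<^esub> b) = \<nu>' i a \<otimes>\<^bsub>add_grp\<^esub> \<nu>' i b"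
          using xy nu' i by (simp add: add_grp_def)
      qed
    next
      fix z :: "nat \<Rightarrow> int"
      obtain g where g: "g \<in> carrier G" "\<forall>i<r. \<nu> i g = z i" using nu(1) unfolding epi_Zr_def by blast
      show "\<exists>g\<in>carrier Q. \<forall>i<r. \<nu>' i g = z i"
        using g nu' phiPi by (intro bexI[of _ "\<phi> g"]) auto
    qed
    have "pullback_Grass G \<phi> (P_nu Q r \<nu>') = qspan G r (\<lambda>i. pullback G \<phi> (\<lambda>x. of_int (\<nu>' i x)))"
      unfolding P_nu_def using pullback_qspan[OF phiPi] by simp
    also have "\<dots> = P_nu G r \<nu>"
      unfolding P_nu_def by (rule qspan_cong) (simp add: pullback_def nu')
    finally have eqpb: "pullback_Grass G \<phi> (P_nu Q r \<nu>') = pullback_Grass G \<phi> P" using nu(2) by simp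
    have "inj_on (pullback G \<phi>) (P_nu Q r \<nu>' \<union> P)"
      using pullback_inj[OF assms(4)] qspan_ext[of Q r] f(3) unfolding inj_on_def P_nu_def by blast
    hence Peq: "P = P_nu Q r \<nu>'"
      using eqpb unfolding pullback_Grass_def by (simp add: inj_on_image_eq_iff)
    have kerI: "ker_Zr Q r \<nu>' = \<phi> ` ker_Zr G r \<nu>"
    proof
      show "ker_Zr Q r \<nu>' \<subseteq> \<phi> ` ker_Zr G r \<nu>"
      proof
        fix y assume "y \<in> ker_Zr Q r \<nu>'"
        then have y: "y \<in> carrier Q" "\<forall>i<r. \<nu>' i y = 0" unfolding ker_Zr_def by auto
        then obtain x where x: "x \<in> carrier G" "y = \<phi> x" using assms(4) by auto
        thus "y \<in> \<phi> ` ker_Zr G r \<nu>" using y nu' unfolding ker_Zr_def by auto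
      qed
      show "\<phi> ` ker_Zr G r \<nu> \<subseteq> ker_Zr Q r \<nu>'"
        using nu' phiPi unfolding ker_Zr_def by auto
    qed
    have b1: "b1_finite Q (ker_Zr Q r \<nu>')"
    proof -
      let ?K = "ker_Zr G r \<nu>"
      have Kc: "?K \<subseteq> carrier G" unfolding ker_Zr_def by auto
      obtain S where S: "finite S" "S \<subseteq> ?K"
        "\<forall>k\<in>?K. \<exists>m::nat. m > 0 \<and> k [^]\<^bsub>G\<^esub> m \<in> generate G (S \<union> derived G ?K)"
        using nu(3) unfolding b1_finite_def by blast
      have dc: "derived G ?K \<subseteq> carrier G" using group.derived_in_carrier[OF gG Kc] .
      have gen: "\<phi> ` generate G (S \<union> derived G ?K) = generate Q (\<phi> ` S \<union> derived Q (\<phi> ` ?K))"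
        using group_hom.generate_img[OF gh, of "S \<union> derived G ?K"] group_hom.derived_img[OF gh Kc]
          S(2) Kc dc by (simp add: image_Un)
      show ?thesis
        unfolding b1_finite_def kerI
      proof (rule exI[of _ "\<phi> ` S"], intro conjI ballI)
        show "finite (\<phi> ` S)" using S(1) by simp
        show "\<phi> ` S \<subseteq> \<phi> ` ?K" using S(2) by auto
        fix k' assume "k' \<in> \<phi> ` ?K"
        then obtain k where k: "k \<in> ?K" "k' = \<phi> k" by auto
        obtain m :: nat where m: "m > 0" "k [^]\<^bsub>G\<^esub> m \<in> generate G (S \<union> derived G ?K)"
          using S(3) k(1) by blast
        have "\<phi> (k [^]\<^bsub>G\<^esub> m) = k' [^]\<^bsub>Q\<^esub> m"
          using group_hom.hom_nat_pow[OF gh] k Kc by auto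
        hence "k' [^]\<^bsub>Q\<^esub> m \<in> generate Q (\<phi> ` S \<union> derived Q (\<phi> ` ?K))"
          using m(2) gen by (metis imageI)
        thus "\<exists>m::nat. m > 0 \<and> k' [^]\<^bsub>Q\<^esub> m \<in> generate Q (\<phi> ` S \<union> derived Q (\<phi> ` ?K))"
          using m(1) by blast
      qed
    qed
    have "P \<in> Omega1 r Q" unfolding Omega1_def using PG epi Peq b1 by blast
    thus False using PnO by simp
  qed
  thus ?thesis using grass by simp
qed

end
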